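(* In the $K$-tier network model described in the context (common path-loss exponent $\alpha>2$, $W=0$), let tier $k$ use target SINR $\beta_k>0$ and rate $\mathcal R_k=\log_2(1+\beta_k)$, and define the transmission efficiency $$\mathcal F_T=\frac{\sum_{k=1}^K\lambda_k\mathcal A_k(1-\mathcal O_k^{int})\mathcal R_k}{\sum_{k=1}^K\lambda_k\mathcal A_k\big(\frac1\eta P_k+M_kP_C\big)}$$ with constants $\eta\in(0,1]$ and $P_C>0$. Regarded as a function of the access threshold $\epsilon$, as $\epsilon\to\infty$, $$\mathcal F_T\to\frac{\sum_{k=1}^K\lambda_k\Omega_k^\delta\mathcal R_k}{\sum_{k=1}^K\lambda_k\Omega_k^\delta\big(\frac1\eta P_k+M_kP_C\big)}.$$
   Context: Network model: $\mathcal K=\{1,\dots,K\}$. In $\mathbb R^2$, tier-$k$ BSs form a homogeneous PPP of intensity $\lambda_k>0$ and users a homogeneous PPP of intensity $\lambda_u>0$, all independent. Tier-$k$ BSs have transmit power $P_k>0$, $M_k\in\mathbb N$ antennas, bias $B_k>0$; common path-loss exponent $\alpha>2$, $\delta=2/\alpha$. $\Omega_k=P_kM_kB_k$, $\Omega_{j,k}=\Omega_j/\Omega_k$, $\Lambda=\sum_j\lambda_j\Omega_j^\delta$. Access threshold $\epsilon>0$, $R_k=(\Omega_k/\epsilon)^{1/\alpha}$. Association: with $D_k$ the distance from a typical user to its nearest tier-$k$ BS, $\hat\rho_k=\Omega_kD_k^{-\alpha}$ if $D_k\le R_k$, else $0$; association with tier $k$ iff $\hat\rho_k>\hat\rho_j$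 for all $j\ne k$, with probability $\mathcal T_k=\frac{\lambda_k\Omega_k^\delta}{\Lambda}(1-e^{-\pi\Lambda\epsilon^{-\delta}})$. Activation probability of tier $j$: $\mathcal A_j=1-\exp\big(-\frac{\lambda_u\Omega_j^\delta}{\Lambda}(1-e^{-\pi\Lambda\epsilon^{-\delta}})\big)$; active tier-$j$ BSs are modeled as a homogeneous PPP of intensity $\mathcal A_j\lambda_j$. Outage model: conditional on association with tier $k$, the serving distance $X_k$ has density $\frac{2\pi\lambda_k}{\mathcal T_k}x\exp(-\pi\frac{\Lambda}{\Omega_k^\delta}x^{2})$ on $(0,R_k]$; given $X_k$, interferers of tier $j$ are the points of independent homogeneous PPPs of intensity $\mathcal A_j\lambda_j$ outside the disk around the user of radius $\Omega_{j,k}^{1/\alpha}X_k$; $\|\mathbf h\|^2\sim\mathrm{Gamma}(M_k,1)$, an interferer of tier $j$ at distance $r$ contributes $P_jVr^{-\alpha}$ with $V\sim\mathrm{Exp}(1)$, all independent; $I_o$ is the total interference and $\mathcal O_k^{int}=\mathbb P\{P_k\|\mathbf h\|^2X_k^{-\alpha}/I_o<\beta_k\}$. $P_C$ is per-antenna circuit power, $\eta$ amplifier efficiency. *)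

theory Defs
  imports "HOL-Probability.Probability"
begin

text \<open>K-tier network; tiers are indexed by 1..K. delta = 2/alpha.\<close>

definition Omega :: "(nat \<Rightarrow> real) \<Rightarrow> (nat \<Rightarrow> nat) \<Rightarrow> (nat \<Rightarrow> real) \<Rightarrow> nat \<Rightarrow> real" where
  "Omega P M B k = P k * real (M k) * B k"

definition Lambda :: "nat \<Rightarrow> (nat \<Rightarrow> real) \<Rightarrow> (nat \<Rightarrow> real) \<Rightarrow> real \<Rightarrow> real" where
  "Lambda K lam Om alpha = (\<Sum>j\<in>{1..K}. lam j * Om j powr (2 / alpha))"

definition assoc_prob :: "nat \<Rightarrow> (nat \<Rightarrow> real) \<Rightarrow> (nat \<Rightarrow> real) \<Rightarrow> real \<Rightarrow> real \<Rightarrow> nat \<Rightarrow> real" where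
  "assoc_prob K lam Om alpha eps k =
     lam k * Om k powr (2 / alpha) / Lambda K lam Om alpha
     * (1 - exp (- pi * Lambda K lam Om alpha * eps powr (- (2 / alpha))))"

definition act_prob :: "nat \<Rightarrow> (nat \<Rightarrow> real) \<Rightarrow> real \<Rightarrow> (nat \<Rightarrow> real) \<Rightarrow> real \<Rightarrow> real \<Rightarrow> nat \<Rightarrow> real" where
  "act_prob K lam lam_u Om alpha eps j =
     1 - exp (- (lam_u * Om j powr (2 / alpha) / Lambda K lam Om alpha)
              * (1 - exp (- pi * Lambda K lam Om alpha * eps powr (- (2 / alpha)))))"

definition acc_radius :: "(nat \<Rightarrow> real) \<Rightarrow> real \<Rightarrow> real \<Rightarrow> nat \<Rightarrow> real" where
  "acc_radius Om alpha eps k = (Om k / eps) powr (1 / alpha)"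

text \<open>Density of the serving distance X_k conditional on association with tier k.\<close>
definition serve_density :: "nat \<Rightarrow> (nat \<Rightarrow> real) \<Rightarrow> (nat \<Rightarrow> real) \<Rightarrow> real \<Rightarrow> real \<Rightarrow> nat \<Rightarrow> real \<Rightarrow> real" where
  "serve_density K lam Om alpha eps k x =
     2 * pi * lam k / assoc_prob K lam Om alpha eps k * x
     * exp (- pi * Lambda K lam Om alpha / Om k powr (2 / alpha) * x\<^sup>2)"

text \<open>Laplace functional of the interference I_o given X_k = x: probability generating
  functional of the independent homogeneous PPPs (intensity A_j lam_j) of tier-j
  interferers outside the disk of radius Omega_{j,k}^{1/alpha} x, with i.i.d. Exp(1) marks V
  and contributions P_j V r^{-alpha}.\<close>
definition interf_laplace ::
  "nat \<Rightarrow> (nat \<Rightarrow> real) \<Rightarrow> real \<Rightarrow> (nat \<Rightarrow> real) \<Rightarrow> (nat \<Rightarrow> real) \<Rightarrow> real \<Rightarrow> real \<Rightarrow> nat \<Rightarrow> real \<Rightarrow> real \<Rightarrow> real" where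
  "interf_laplace K lam lam_u P Om alpha eps k x s =
     exp (- (\<Sum>j\<in>{1..K}. act_prob K lam lam_u Om alpha eps j * lam j *
        (LINT y : {y :: real \<times> real. norm y > (Om j / Om k) powr (1 / alpha) * x} | lborel.
           (1 - (LINT v | lborel. exponential_density 1 v * exp (- s * P j * v * norm y powr (- alpha)))))))"

text \<open>mu is the law of the total interference I_o given X_k = x: a probability law on the
  nonnegative reals whose Laplace transform is the PPP shot-noise Laplace functional
  (this determines the law uniquely).\<close>
definition is_interf_law ::
  "real measure \<Rightarrow> nat \<Rightarrow> (nat \<Rightarrow> real) \<Rightarrow> real \<Rightarrow> (nat \<Rightarrow> real) \<Rightarrow> (nat \<Rightarrow> real) \<Rightarrow> real \<Rightarrow> real \<Rightarrow> nat \<Rightarrow> real \<Rightarrow> bool" where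
  "is_interf_law mu K lam lam_u P Om alpha eps k x \<longleftrightarrow>
     prob_space mu \<and> sets mu = sets borel \<and> (AE i in mu. 0 \<le> i) \<and>
     (\<forall>s\<ge>0. (\<integral>i. exp (- s * i) \<partial>mu) = interf_laplace K lam lam_u P Om alpha eps k x s)"

text \<open>Outage probability O_k^int = P{ P_k |h|^2 X_k^{-alpha} / I_o < beta_k } with
  |h|^2 ~ Gamma(M_k,1) (= Erlang with shape M_k, rate 1), independent of X_k and I_o;
  equivalently the event |h|^2 < beta_k X_k^alpha I_o / P_k.
  mu x is the law of I_o given X_k = x.\<close>
definition outage ::
  "nat \<Rightarrow> (nat \<Rightarrow> real) \<Rightarrow> (nat \<Rightarrow> real) \<Rightarrow> (nat \<Rightarrow> nat) \<Rightarrow> (nat \<Rightarrow> real) \<Rightarrow> real \<Rightarrow> (nat \<Rightarrow> real)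
   \<Rightarrow> real \<Rightarrow> nat \<Rightarrow> (real \<Rightarrow> real measure) \<Rightarrow> real" where
  "outage K lam P M Om alpha beta eps k mu =
     (LINT x : {0<..acc_radius Om alpha eps k} | lborel.
        serve_density K lam Om alpha eps k x *
        (\<integral>i. measure (density lborel (erlang_density (M k - 1) 1))
               {..< beta k * x powr alpha * i / P k} \<partial>(mu x)))"

definition trans_eff ::
  "nat \<Rightarrow> (nat \<Rightarrow> real) \<Rightarrow> real \<Rightarrow> (nat \<Rightarrow> real) \<Rightarrow> (nat \<Rightarrow> nat) \<Rightarrow> (nat \<Rightarrow> real) \<Rightarrow> real
   \<Rightarrow> (nat \<Rightarrow> real) \<Rightarrow> real \<Rightarrow> real \<Rightarrow> (real \<Rightarrow> nat \<Rightarrow> real \<Rightarrow> real measure) \<Rightarrow> real \<Rightarrow> real" where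
  "trans_eff K lam lam_u P M B alpha beta eta PC mu eps =
     (let Om = Omega P M B in
      (\<Sum>k\<in>{1..K}. lam k * act_prob K lam lam_u Om alpha eps k
          * (1 - outage K lam P M Om alpha beta eps k (mu eps k)) * log 2 (1 + beta k))
      / (\<Sum>k\<in>{1..K}. lam k * act_prob K lam lam_u Om alpha eps k * (P k / eta + real (M k) * PC)))"

end

theory Submission
  imports Defs "HOL-Real_Asymp.Real_Asymp"
begin


lemma expo_bound:
  fixes b :: real assumes b: "b \<ge> 0"
  shows "1 - (LINT v | lborel. exponential_density 1 v * exp (- (b * v))) \<le> b"
proof -
  have i0: "has_bochner_integral lborel (exponential_density 1) 1"
    using nn_integral_erlang_ith_moment[of 1 0 0]
    by (intro has_bochner_integral_nn_integral) auto
  have i1: "has_bochner_integral lborel (\<lambda>v. exponential_density 1 v * v) 1"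
    using nn_integral_erlang_ith_moment[of 1 0 1]
    by (intro has_bochner_integral_nn_integral) (auto simp: exponential_density_def)
  have int: "integrable lborel (\<lambda>v. exponential_density 1 v * exp (- (b * v)))"
  proof (rule Bochner_Integration.integrable_bound)
    show "integrable lborel (exponential_density 1)" by (rule integrable.intros[OF i0])
    show "AE x in lborel. norm (exponential_density 1 x * exp (- (b * x))) \<le> norm (exponential_density 1 x)"
      using b by (auto simp: exponential_density_def abs_mult)
  qed auto
  have "(LINT v | lborel. exponential_density 1 v - b * (exponential_density 1 v * v))
      \<le> (LINT v | lborel. exponential_density 1 v * exp (- (b * v)))"
  proof (rule integral_mono)
    show "integrable lborel (\<lambda>v. exponential_density 1 v - b * (exponential_density 1 v * v))"
      using integrable.intros[OF i0] integrable.intros[OF i1] by (intro Bochner_Integration.integrable_diff Bochner_Integration.integrable_mult_right)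
    show "integrable lborel (\<lambda>v. exponential_density 1 v * exp (- (b * v)))" by (rule int)
    fix v :: real
    have "1 - b * v \<le> exp (- (b * v))" using exp_ge_add_one_self[of "-(b * v)"] by linarith
    hence "exponential_density 1 v * (1 - b * v) \<le> exponential_density 1 v * exp (- (b * v))"
      by (intro mult_left_mono) (auto simp: exponential_density_def)
    thus "exponential_density 1 v - b * (exponential_density 1 v * v) \<le> exponential_density 1 v * exp (- (b * v))"
      by (simp add: algebra_simps)
  qed
  moreover have "(LINT v | lborel. exponential_density 1 v - b * (exponential_density 1 v * v)) = 1 - b"
  proof -
    have "has_bochner_integral lborel (\<lambda>v. exponential_density 1 v - b * (exponential_density 1 v * v)) (1 - b * 1)"
      by (intro has_bochner_integral_diff has_bochner_integral_mult_right i0 i1)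
    thus ?thesis by (simp add: has_bochner_integral_integral_eq)
  qed
  ultimately show ?thesis by linarith
qed

lemma erlang_bound:
  fixes t :: real assumes t: "t \<ge> 0"
  shows "measure (density lborel (erlang_density k 1)) {..<t} \<le> 1 - exp (- t)"
proof -
  interpret p: prob_space "density lborel (erlang_density k 1)"
    by (rule prob_space_erlang_density) simp
  have "measure (density lborel (erlang_density k 1)) {..<t} \<le> measure (density lborel (erlang_density k 1)) {..t}"
    by (intro p.finite_measure_mono) auto
  also have "\<dots> = erlang_CDF k 1 t"
    using emeasure_erlang_density[of 1 k t] erlang_CDF_nonneg[of 1 k t]
    by (simp add: measure_def)
  also have "\<dots> \<le> 1 - exp (- t)"
  proof -
    have "exp (-t) \<le> (\<Sum>n\<le>k. t ^ n * exp (- t) / fact n)"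
      using sum_nonneg_leq_bound[of "{..k}"] 
      by (subst sum.atMost_shift) (auto intro!: sum_nonneg simp: t)
    thus ?thesis using t by (simp add: erlang_CDF_def)
  qed
  finally show ?thesis .
qed


lemma shifted_powr_deriv:
  "x > -1 \<Longrightarrow> q > 1 \<Longrightarrow> ((\<lambda>x::real. (1 + x) powr (1 - q) / (1 - q)) has_real_derivative (1 + x) powr (-q)) (at x)"
  apply (rule derivative_eq_intros refl | simp)+
  done

lemma shifted_powr_has_integral:
  fixes q :: real assumes q: "q > 1"
  shows "((\<lambda>x. (1 + x) powr (-q)) has_integral 1 / (q - 1)) {0..}"
proof (intro has_integral_to_inf integrable_continuous_interval continuous_intros)
  define F where "F \<equiv> \<lambda>x::real. (1 + x) powr (1 - q) / (1 - q)"
  have "((\<lambda>x. (1 + x) powr (-q)) has_integral (F y - F 0)) {0..y}" if "y \<ge> 0" for y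
  proof (rule fundamental_theorem_of_calculus[OF that])
    fix x assume "x \<in> {0..y}"
    hence "x > -1" by auto
    from shifted_powr_deriv[OF this q] 
    show "(F has_vector_derivative (1 + x) powr (-q)) (at x within {0..y})"
      unfolding F_def has_real_derivative_iff_has_vector_derivative[symmetric] by (rule has_field_derivative_at_within)
  qed
  then have "\<forall>\<^sub>F y in at_top. integral {0..y} (\<lambda>x. (1 + x) powr (-q)) = F y - F 0"
    by (meson eventually_at_top_linorderI integral_unique)
  moreover have "((\<lambda>y::real. F y - F 0) \<longlongrightarrow> 1 / (q - 1)) at_top"
  proof -
    have f1: "filterlim (\<lambda>y::real. 1 + y) at_top at_top"
      by (rule filterlim_tendsto_add_at_top[OF tendsto_const filterlim_ident])
    have "((\<lambda>y::real. (1 + y) powr (1 - q)) \<longlongrightarrow> 0) at_top"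
      by (rule tendsto_neg_powr[OF _ f1]) (use q in simp)
    hence "((\<lambda>y::real. F y) \<longlongrightarrow> 0) at_top"
      unfolding F_def by (rule tendsto_divide_zero)
    hence "((\<lambda>y::real. F y - F 0) \<longlongrightarrow> 0 - F 0) at_top"
      by (intro tendsto_diff tendsto_const)
    moreover have "0 - F 0 = 1 / (q - 1)" using q by (simp add: F_def field_simps)
    ultimately show ?thesis by simp
  qed
  ultimately 
  show "((\<lambda>y. integral {0..y} (\<lambda>x. (1 + x) powr (-q)))  \<longlongrightarrow> 1 / (q - 1)) at_top"
    by (simp add: filterlim_cong)
qed (use q in auto)

definition hq :: "real \<Rightarrow> real \<Rightarrow> real" where
  "hq q t = (1 + \<bar>t\<bar>) powr (-q)"

lemma hq_nonneg: "hq q t \<ge> 0" by (simp add: hq_def)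

lemma hq_integrable:
  fixes q :: real assumes q: "q > 1"
  shows "integrable lborel (hq q)"
proof -
  define g where "g = (\<lambda>x::real. indicator {0..} x * (1 + x) powr (-q))"
  have "(\<lambda>x. (1 + x) powr (-q)) absolutely_integrable_on {0..}"
    using shifted_powr_has_integral[OF q]
    by (intro nonnegative_absolutely_integrable_1) (auto simp: integrable_on_def)
  hence "integrable lebesgue g"
    by (simp add: g_def set_integrable_def mult.commute)
  hence gi: "integrable lborel g"
    by (subst (asm) integrable_completion) (auto simp: g_def)
  hence gi': "integrable lborel (\<lambda>x. g (0 + (-1) * x))"
    by (subst lborel_integrable_real_affine_iff) auto
  show ?thesis
  proof (rule Bochner_Integration.integrable_bound[OF Bochner_Integration.integrable_add[OF gi gi']])
    show "hq q \<in> borel_measurable lborel" unfolding hq_def by measurable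
    show "AE x in lborel. norm (hq q x) \<le> norm (g x + g (0 + - 1 * x))"
      by (auto simp: hq_def g_def indicator_def)
  qed
qed

lemma hq_prod_integrable:
  fixes q :: real assumes q: "q > 1"
  shows "integrable lborel (\<lambda>y::real\<times>real. hq q (fst y) * hq q (snd y))"
proof -
  have hi: "integrable lborel (hq q)" by (rule hq_integrable[OF q])
  have m: "(\<lambda>y::real\<times>real. ennreal (hq q (fst y) * hq q (snd y))) \<in> borel_measurable (lborel \<Otimes>\<^sub>M lborel)"
    unfolding hq_def by measurable
  have "(\<integral>\<^sup>+y. ennreal (hq q (fst y) * hq q (snd y)) \<partial>(lborel::(real\<times>real) measure))
     = (\<integral>\<^sup>+y. ennreal (hq q (fst y) * hq q (snd y)) \<partial>(lborel \<Otimes>\<^sub>M lborel))"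
    by (simp add: lborel_prod)
  also have "\<dots> = (\<integral>\<^sup>+x. \<integral>\<^sup>+y. ennreal (hq q x * hq q y) \<partial>lborel \<partial>lborel)"
    using lborel.nn_integral_fst[OF m] by simp
  also have "\<dots> = (\<integral>\<^sup>+x. ennreal (hq q x) * ennreal (integral\<^sup>L lborel (hq q)) \<partial>lborel)"
  proof (intro nn_integral_cong)
    fix x
    have "(\<integral>\<^sup>+y. ennreal (hq q x * hq q y) \<partial>lborel) = (\<integral>\<^sup>+y. ennreal (hq q x) * ennreal (hq q y) \<partial>lborel)"
      by (simp add: ennreal_mult hq_nonneg)
    also have "\<dots> = ennreal (hq q x) * (\<integral>\<^sup>+y. ennreal (hq q y) \<partial>lborel)"
      by (rule nn_integral_cmult) (simp add: hq_def)
    also have "(\<integral>\<^sup>+y. ennreal (hq q y) \<partial>lborel) = ennreal (integral\<^sup>L lborel (hq q))"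
      by (rule nn_integral_eq_integral[OF hi]) (simp add: hq_nonneg)
    finally show "(\<integral>\<^sup>+y. ennreal (hq q x * hq q y) \<partial>lborel) = ennreal (hq q x) * ennreal (integral\<^sup>L lborel (hq q))" .
  qed
  also have "\<dots> = (\<integral>\<^sup>+x. ennreal (hq q x) \<partial>lborel) * ennreal (integral\<^sup>L lborel (hq q))"
    by (rule nn_integral_multc) (simp add: hq_def)
  also have "\<dots> = ennreal (integral\<^sup>L lborel (hq q) * integral\<^sup>L lborel (hq q))"
    by (simp add: nn_integral_eq_integral[OF hi] hq_nonneg ennreal_mult integral_nonneg_AE)
  finally have fin: "(\<integral>\<^sup>+y. ennreal (hq q (fst y) * hq q (snd y)) \<partial>(lborel::(real\<times>real) measure)) = ennreal (integral\<^sup>L lborel (hq q) * integral\<^sup>L lborel (hq q))" .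
  have mb: "(\<lambda>y::real\<times>real. hq q (fst y) * hq q (snd y)) \<in> borel_measurable lborel"
    unfolding hq_def measurable_lborel2 by (intro borel_measurable_continuous_onI continuous_intros) (auto simp: add_pos_nonneg)
  show ?thesis
    by (rule integrableI_nn_integral_finite[OF mb _ fin]) (simp add: hq_nonneg)
qed

lemma min_le_hq:
  fixes y :: "real \<times> real" and alpha :: real assumes a: "alpha > 2"
  shows "min 1 (norm y powr (-alpha)) \<le> 2 powr alpha * (hq (alpha/2) (fst y) * hq (alpha/2) (snd y))"
proof -
  obtain a b where y: "y = (a, b)" by (cases y)
  define n where "n = norm y"
  have n0: "n \<ge> 0" by (simp add: n_def)
  have an: "\<bar>a\<bar> \<le> n" "\<bar>b\<bar> \<le> n" unfolding n_def y
    by (auto simp: norm_Pair intro: real_sqrt_ge_abs1 real_sqrt_ge_abs2)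
  have 1: "min 1 (n powr (-alpha)) \<le> 2 powr alpha * (1 + n) powr (-alpha)"
  proof (cases "n \<le> 1")
    case True
    have "(1 + n) powr (-alpha) \<ge> 2 powr (-alpha)"
      using True n0 a by (intro powr_mono2') auto
    hence "2 powr alpha * (1 + n) powr (-alpha) \<ge> 2 powr alpha * 2 powr (-alpha)"
      by (intro mult_left_mono) auto
    also have "2 powr alpha * 2 powr (-alpha) = (1::real)" by (simp add: powr_minus field_simps)
    finally show ?thesis by linarith
  next
    case False
    have "(1 + n) powr (-alpha) \<ge> (2 * n) powr (-alpha)"
      using False n0 a by (intro powr_mono2') auto
    hence "2 powr alpha * (1 + n) powr (-alpha) \<ge> 2 powr alpha * (2 * n) powr (-alpha)"
      by (intro mult_left_mono) auto
    also have "2 powr alpha * (2 * n) powr (-alpha) = n powr (-alpha)"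
      using False by (simp add: powr_mult powr_minus field_simps)
    finally show ?thesis by linarith
  qed
  have "(1 + n) powr (-alpha) = ((1 + n) * (1 + n)) powr (-(alpha/2))"
    using n0 by (simp add: powr_mult powr_add[symmetric])
  also have "\<dots> \<le> ((1 + \<bar>a\<bar>) * (1 + \<bar>b\<bar>)) powr (-(alpha/2))"
    using an a by (intro powr_mono2' mult_mono) auto
  also have "\<dots> = hq (alpha/2) a * hq (alpha/2) b"
    by (simp add: hq_def powr_mult)
  finally have "(1 + n) powr (-alpha) \<le> hq (alpha/2) a * hq (alpha/2) b" .
  hence "2 powr alpha * (1 + n) powr (-alpha) \<le> 2 powr alpha * (hq (alpha/2) a * hq (alpha/2) b)"
    by (intro mult_left_mono) auto
  with 1 have "min 1 (n powr (-alpha)) \<le> 2 powr alpha * (hq (alpha/2) a * hq (alpha/2) b)" by linarith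
  thus ?thesis by (simp add: n_def y)
qed


lemma set_int_le:
  fixes f g :: "'a \<Rightarrow> real"
  assumes g: "integrable M g" and le: "\<And>x. indicator A x * f x \<le> g x" and g0: "\<And>x. 0 \<le> g x"
  shows "(LINT x:A|M. f x) \<le> integral\<^sup>L M g"
proof (cases "integrable M (\<lambda>x. indicator A x *\<^sub>R f x)")
  case True
  thus ?thesis unfolding set_lebesgue_integral_def using g le by (intro integral_mono) auto
next
  case False
  thus ?thesis unfolding set_lebesgue_integral_def using g0
    by (simp add: not_integrable_integral_eq integral_nonneg)
qed

lemma J_bound:
  fixes alpha Oj Ok Pj Pk beta x X0 c :: real
  assumes a: "alpha > 2" and pos: "Oj > 0" "Ok > 0" "Pj > 0" "Pk > 0" "beta > 0"
    and x: "0 < x" "x \<le> X0" and c: "c = beta * x powr alpha / Pk"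
  shows "(LINT y : {y :: real \<times> real. norm y > (Oj / Ok) powr (1 / alpha) * x} | lborel.
           (1 - (LINT v | lborel. exponential_density 1 v * exp (- c * Pj * v * norm y powr (- alpha)))))
        \<le> (beta * Pj * Ok / (Pk * Oj) + beta * X0 powr alpha * Pj / Pk) * 2 powr alpha
            * (LINT y | lborel. hq (alpha/2) (fst y) * hq (alpha/2) (snd y))"
proof -
  define K1 where "K1 = beta * Pj * Ok / (Pk * Oj)"
  define K3 where "K3 = beta * X0 powr alpha * Pj / Pk"
  define H where "H = (\<lambda>y::real\<times>real. hq (alpha/2) (fst y) * hq (alpha/2) (snd y))"
  define r where "r = (Oj / Ok) powr (1 / alpha) * x"
  have r0: "r > 0" using pos x by (simp add: r_def)
  have K1: "K1 \<ge> 0" "K3 \<ge> 0" using pos by (auto simp: K1_def K3_def)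
  have c0: "c \<ge> 0" using c pos by simp
  have Hi: "integrable lborel H" unfolding H_def by (rule hq_prod_integrable) (use a in simp)
  have H0: "\<And>y. H y \<ge> 0" by (simp add: H_def hq_nonneg)
  have pt: "indicator {y. norm y > r} y * (1 - (LINT v | lborel. exponential_density 1 v * exp (- c * Pj * v * norm y powr (- alpha))))
     \<le> (K1 + K3) * 2 powr alpha * H y" for y :: "real \<times> real"
  proof (cases "norm y > r")
    case False
    thus ?thesis using H0[of y] K1 by simp
  next
    case True
    define b where "b = c * Pj * norm y powr (- alpha)"
    have b0: "b \<ge> 0" using c0 pos by (simp add: b_def)
    have "(LINT v | lborel. exponential_density 1 v * exp (- c * Pj * v * norm y powr (- alpha)))
        = (LINT v | lborel. exponential_density 1 v * exp (- (b * v)))"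
      by (simp add: b_def algebra_simps)
    hence 1: "1 - (LINT v | lborel. exponential_density 1 v * exp (- c * Pj * v * norm y powr (- alpha))) \<le> b"
      using expo_bound[OF b0] by simp
    have ny: "norm y powr (- alpha) \<le> r powr (- alpha)"
      using True r0 a by (intro powr_mono2') auto
    have "r powr (- alpha) = (Oj / Ok) powr (-1) * x powr (- alpha)"
      unfolding r_def using pos x a by (simp add: powr_mult powr_powr)
    also have "(Oj / Ok) powr (-1) = Ok / Oj" using pos by (simp add: powr_minus_divide)
    finally have rr: "r powr (- alpha) = Ok / Oj * x powr (- alpha)" .
    have xx: "x powr alpha * x powr (-alpha) = 1" using x by (simp add: powr_minus)
    have "c * Pj * r powr (- alpha) = beta * Pj * Ok / (Pk * Oj) * (x powr alpha * x powr (-alpha))"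
      unfolding rr c by (simp add: field_simps)
    hence "c * Pj * r powr (- alpha) = K1" unfolding xx K1_def by simp
    hence bK1: "b \<le> K1" unfolding b_def using ny c0 pos
      by (metis mult_left_mono mult_nonneg_nonneg less_imp_le)
    have "c \<le> beta * X0 powr alpha / Pk"
      unfolding c using pos x a by (intro divide_right_mono mult_left_mono powr_mono2) auto
    hence bK3: "b \<le> K3 * norm y powr (- alpha)"
      unfolding b_def K3_def using pos
      by (smt (verit, best) mult_right_mono powr_ge_zero times_divide_eq_left mult.commute mult.assoc)
    have "b \<le> (K1 + K3) * min 1 (norm y powr (- alpha))"
    proof (cases "norm y powr (- alpha) \<le> 1")
      case True
      hence "min 1 (norm y powr (- alpha)) = norm y powr (- alpha)" by simp
      moreover have "K1 * norm y powr (- alpha) \<ge> 0" using K1 by simp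
      ultimately show ?thesis using bK3 by (simp add: algebra_simps)
    next
      case False
      thus ?thesis using bK1 K1 by simp
    qed
    also have "\<dots> \<le> (K1 + K3) * (2 powr alpha * H y)"
      unfolding H_def using min_le_hq[OF a, of y] K1 by (intro mult_left_mono) auto
    finally show ?thesis using 1 True by simp
  qed
  have "(LINT y : {y :: real \<times> real. norm y > r} | lborel. (1 - (LINT v | lborel. exponential_density 1 v * exp (- c * Pj * v * norm y powr (- alpha)))))
      \<le> integral\<^sup>L lborel (\<lambda>y. (K1 + K3) * 2 powr alpha * H y)"
    by (rule set_int_le[OF _ pt]) (use Hi H0 K1 in auto)
  also have "\<dots> = (K1 + K3) * 2 powr alpha * integral\<^sup>L lborel H" by simp
  finally show ?thesis unfolding K1_def K3_def H_def r_def .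
qed

lemma inner_bound:
  fixes mu :: "real measure" and a p Lv :: real
  assumes mu: "prob_space mu" "sets mu = sets borel" "AE i in mu. 0 \<le> i"
    and a: "a \<ge> 0" "p > 0"
    and L: "(\<integral>i. exp (- (a / p) * i) \<partial>mu) = Lv" and Lv: "Lv > 0"
  shows "(\<integral>i. measure (density lborel (erlang_density m 1)) {..< a * i / p} \<partial>mu) \<le> 1 - Lv"
proof -
  interpret prob_space mu by (rule mu(1))
  have ei: "integrable mu (\<lambda>i. exp (- (a / p) * i))"
    using L Lv not_integrable_integral_eq by fastforce
  show ?thesis
  proof (cases "integrable mu (\<lambda>i. measure (density lborel (erlang_density m 1)) {..< a * i / p})")
    case True
    have "(\<integral>i. measure (density lborel (erlang_density m 1)) {..< a * i / p} \<partial>mu)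
        \<le> (\<integral>i. 1 - exp (- (a / p) * i) \<partial>mu)"
    proof (rule integral_mono_AE[OF True])
      show "integrable mu (\<lambda>i. 1 - exp (- (a / p) * i))" using ei by simp
      show "AE i in mu. measure (density lborel (erlang_density m 1)) {..< a * i / p} \<le> 1 - exp (- (a / p) * i)"
        using mu(3)
      proof eventually_elim
        case (elim i)
        have "a * i / p \<ge> 0" using elim a by simp
        from erlang_bound[OF this, of m] show ?case by (simp add: field_simps)
      qed
    qed
    also have "\<dots> = 1 - Lv" using ei L prob_space by (simp add: Bochner_Integration.integral_diff)
    finally show ?thesis .
  next
    case False
    have "Lv \<le> (\<integral>i. 1 \<partial>mu)"
      unfolding L[symmetric]
    proof (rule integral_mono_AE[OF ei])
      show "AE i in mu. exp (- (a / p) * i) \<le> 1" using mu(3) by eventually_elim (use a in simp)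
    qed simp
    thus ?thesis using False prob_space by (simp add: not_integrable_integral_eq)
  qed
qed

lemma asym1:
  fixes L c d :: real assumes "L > 0" "c > 0" "d > 0"
  shows "((\<lambda>e. (1 - exp (- c * (1 - exp (- pi * L * e powr (- d))))) / (1 - exp (- pi * L * e powr (- d)))) \<longlongrightarrow> c) at_top"
  using assms by (real_asymp simp add: field_simps)

lemma asym2:
  fixes L cj a Ok lk :: real assumes "L > 0" "cj > 0" "a > 2" "Ok > 0" "lk > 0"
  shows "((\<lambda>e. (Ok / e) powr (1 / a) * (Ok / e) powr (1 / a) * (1 - exp (- cj * (1 - exp (- pi * L * e powr (- (2 / a))))))
     / (lk * Ok powr (2 / a) / L * (1 - exp (- pi * L * e powr (- (2 / a)))))) \<longlongrightarrow> 0) at_top"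
  using assms by real_asymp



lemma outage_tendsto:
  fixes K :: nat and lam :: "nat \<Rightarrow> real" and lam_u :: real
    and P :: "nat \<Rightarrow> real" and M :: "nat \<Rightarrow> nat" and B :: "nat \<Rightarrow> real"
    and alpha :: real and beta :: "nat \<Rightarrow> real"
    and mu :: "real \<Rightarrow> nat \<Rightarrow> real \<Rightarrow> real measure"
  assumes hyp: "\<forall>k\<in>{1..K}. lam k > 0 \<and> P k > 0 \<and> M k \<ge> 1 \<and> B k > 0 \<and> beta k > 0"
    and lu: "lam_u > 0" and a: "alpha > 2"
    and law: "\<forall>eps>0. \<forall>k\<in>{1..K}. \<forall>x\<in>{0<..acc_radius (Omega P M B) alpha eps k}.
           is_interf_law (mu eps k x) K lam lam_u P (Omega P M B) alpha eps k x"
    and k: "k \<in> {1..K}"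
  shows "((\<lambda>eps. outage K lam P M (Omega P M B) alpha beta eps k (mu eps k)) \<longlongrightarrow> 0) at_top"
proof -
  define Om where "Om = Omega P M B"
  define L where "L = Lambda K lam Om alpha"
  define w where "w = (\<lambda>eps::real. 1 - exp (- pi * L * eps powr (- (2 / alpha))))"
  define ck where "ck = (\<lambda>j. lam_u * Om j powr (2 / alpha) / L)"
  define R where "R = (\<lambda>eps. acc_radius Om alpha eps k)"
  define T where "T = (\<lambda>eps. assoc_prob K lam Om alpha eps k)"
  define A where "A = (\<lambda>eps j. act_prob K lam lam_u Om alpha eps j)"
  define X0 where "X0 = Om k powr (1 / alpha)"
  define Iq where "Iq = (LINT y | lborel. hq (alpha/2) (fst y) * hq (alpha/2) (snd y))"
  define D where "D = (\<lambda>j. (beta k * P j * Om k / (P k * Om j) + beta k * X0 powr alpha * P j / P k) * 2 powr alpha * Iq)"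
  have Om0: "Om j > 0" if j: "j \<in> {1..K}" for j
  proof -
    have "P j > 0" "M j \<ge> 1" "B j > 0" using hyp j by auto
    thus ?thesis by (simp add: Om_def Omega_def)
  qed
  have lam0: "\<And>j. j \<in> {1..K} \<Longrightarrow> lam j > 0" and P0: "\<And>j. j \<in> {1..K} \<Longrightarrow> P j > 0"
    and b0: "\<And>j. j \<in> {1..K} \<Longrightarrow> beta j > 0" using hyp by auto
  have lo: "lam j * Om j powr (2 / alpha) > 0" if j: "j \<in> {1..K}" for j
    using lam0[OF j] Om0[OF j] by simp
  have L0: "L > 0" unfolding L_def Lambda_def
    using k lo by (intro sum_pos) auto
  have w0: "\<And>eps. eps > 0 \<Longrightarrow> w eps > 0" unfolding w_def using L0 by auto
  have ck0: "ck j > 0" if j: "j \<in> {1..K}" for j unfolding ck_def using lu Om0[OF j] L0 by simp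
  have A_eq: "\<And>eps j. A eps j = 1 - exp (- ck j * w eps)"
    by (simp add: A_def act_prob_def ck_def w_def L_def)
  have A0: "A eps j \<ge> 0" if eps: "eps > 0" and j: "j \<in> {1..K}" for eps j
  proof -
    have "ck j * w eps > 0" using ck0[OF j] w0[OF eps] by simp
    hence "exp (- ck j * w eps) \<le> 1" by simp
    thus ?thesis unfolding A_eq by simp
  qed
  have T_eq: "\<And>eps. T eps = lam k * Om k powr (2 / alpha) / L * w eps"
    by (simp add: T_def assoc_prob_def w_def L_def)
  have T0: "T eps > 0" if eps: "eps > 0" for eps
    unfolding T_eq using lam0[OF k] Om0[OF k] L0 w0[OF eps] by simp
  have Iq0: "Iq \<ge> 0" unfolding Iq_def by (intro Bochner_Integration.integral_nonneg) (simp add: hq_nonneg)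
  have D0: "D j \<ge> 0" if j: "j \<in> {1..K}" for j
    unfolding D_def using Iq0 P0[OF j] P0[OF k] Om0[OF j] Om0[OF k] b0[OF k] by simp
  define E where "E = (\<lambda>eps. \<Sum>j\<in>{1..K}. A eps j * lam j * D j)"
  define C where "C = (\<lambda>eps. 2 * pi * lam k / T eps * R eps * E eps)"
  have E0: "E eps \<ge> 0" if eps: "eps > 0" for eps
    unfolding E_def using A0[OF eps] lam0 D0 by (intro sum_nonneg mult_nonneg_nonneg) (auto intro: less_imp_le)
  have R_le: "\<And>eps. eps \<ge> 1 \<Longrightarrow> R eps \<le> X0"
    unfolding R_def X0_def acc_radius_def using Om0[OF k] a
    by (intro powr_mono2) (auto simp: divide_le_eq)
  have R0: "R eps \<ge> 0" for eps by (simp add: R_def acc_radius_def)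
  have inner: "(\<integral>i. measure (density lborel (erlang_density (M k - 1) 1)) {..< beta k * x powr alpha * i / P k} \<partial>(mu eps k x))
       \<le> E eps" if eps: "eps \<ge> 1" and x: "x \<in> {0<..R eps}" for eps x
  proof -
    have eps0: "eps > 0" using eps by simp
    have lw: "is_interf_law (mu eps k x) K lam lam_u P Om alpha eps k x"
      using law eps0 k x by (auto simp: Om_def R_def)
    define c where "c = beta k * x powr alpha / P k"
    define J where "J = (\<lambda>j. (LINT y : {y :: real \<times> real. norm y > (Om j / Om k) powr (1 / alpha) * x} | lborel.
           (1 - (LINT v | lborel. exponential_density 1 v * exp (- c * P j * v * norm y powr (- alpha))))))"
    have x0: "x > 0" "x \<le> X0" using x R_le[OF eps] by auto
    have JD: "J j \<le> D j" if j: "j \<in> {1..K}" for j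
      unfolding J_def D_def Iq_def
      by (rule J_bound[OF a Om0[OF j] Om0[OF k] P0[OF j] P0[OF k] b0[OF k] x0 c_def])
    define S where "S = (\<Sum>j\<in>{1..K}. A eps j * lam j * J j)"
    have SE: "S \<le> E eps" unfolding S_def E_def
      using JD A0[OF eps0] lam0 by (intro sum_mono mult_left_mono mult_nonneg_nonneg) (auto intro: less_imp_le)
    have IL: "interf_laplace K lam lam_u P Om alpha eps k x c = exp (- S)"
      unfolding interf_laplace_def S_def J_def A_def by simp
    have "(\<integral>i. measure (density lborel (erlang_density (M k - 1) 1)) {..< beta k * x powr alpha * i / P k} \<partial>(mu eps k x))
        \<le> 1 - interf_laplace K lam lam_u P Om alpha eps k x c"
    proof (rule inner_bound)
      show "prob_space (mu eps k x)" "sets (mu eps k x) = sets borel" "AE i in mu eps k x. 0 \<le> i"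
        using lw by (auto simp: is_interf_law_def)
      show "0 \<le> beta k * x powr alpha" using b0[OF k] by simp
      show "0 < P k" by (rule P0[OF k])
      have "c \<ge> 0" unfolding c_def using b0[OF k] P0[OF k] by simp
      thus "(\<integral>i. exp (- (beta k * x powr alpha / P k) * i) \<partial>mu eps k x) = interf_laplace K lam lam_u P Om alpha eps k x c"
        using lw unfolding is_interf_law_def c_def by blast
      show "interf_laplace K lam lam_u P Om alpha eps k x c > 0" unfolding IL by simp
    qed
    also have "\<dots> \<le> S" unfolding IL using exp_ge_add_one_self[of "- S"] by linarith
    finally show ?thesis using SE by linarith
  qed
  have inner0: "0 \<le> (\<integral>i. measure (density lborel (erlang_density (M k - 1) 1)) {..< beta k * x powr alpha * i / P k} \<partial>(mu eps k x))" for eps x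
    by (intro Bochner_Integration.integral_nonneg) simp
  have sd_eq: "serve_density K lam Om alpha eps k x = 2 * pi * lam k / T eps * x * exp (- pi * L / Om k powr (2 / alpha) * x\<^sup>2)" for eps x
    by (simp add: serve_density_def T_def L_def)
  have up: "outage K lam P M Om alpha beta eps k (mu eps k) \<le> C eps * R eps" if eps: "eps \<ge> 1" for eps
  proof -
    have eps0: "eps > 0" using eps by simp
    have C0: "C eps \<ge> 0" unfolding C_def using T0[OF eps0] E0[OF eps0] lam0[OF k]
      by (auto simp: R_def acc_radius_def)
    have "outage K lam P M Om alpha beta eps k (mu eps k) \<le> integral\<^sup>L lborel (\<lambda>x. indicator {0<..R eps} x * C eps)"
      unfolding outage_def
    proof (rule set_int_le[where g = "\<lambda>x. indicator {0<..R eps} x * C eps"])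
      show "integrable lborel (\<lambda>x. indicator {0<..R eps} x * C eps)"
        using R0[of eps] by (intro integrable_mult_left integrable_real_indicator) auto
      show "0 \<le> indicator {0<..R eps} x * C eps" for x using C0 by simp
      fix x
      show "indicator {0<..acc_radius Om alpha eps k} x *
         (serve_density K lam Om alpha eps k x *
          (\<integral>i. measure (density lborel (erlang_density (M k - 1) 1)) {..<beta k * x powr alpha * i / P k} \<partial>mu eps k x))
         \<le> indicator {0<..R eps} x * C eps"
      proof (cases "x \<in> {0<..R eps}")
        case False thus ?thesis by (simp add: R_def)
        next
        case True
        have sd_le: "serve_density K lam Om alpha eps k x \<le> 2 * pi * lam k / T eps * R eps"
        proof -
          have "exp (- pi * L / Om k powr (2 / alpha) * x\<^sup>2) \<le> 1"
            using L0 Om0[OF k] by (simp add: divide_nonneg_pos)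
          moreover have "0 \<le> 2 * pi * lam k / T eps * x" using True T0[OF eps0] lam0[OF k] by simp
          ultimately have "serve_density K lam Om alpha eps k x \<le> 2 * pi * lam k / T eps * x"
            unfolding sd_eq by (metis mult_left_mono mult.right_neutral)
          also have "\<dots> \<le> 2 * pi * lam k / T eps * R eps"
            using True T0[OF eps0] lam0[OF k] by (intro mult_left_mono) auto
          finally show ?thesis .
        qed
        have sd0: "serve_density K lam Om alpha eps k x \<ge> 0"
          unfolding sd_eq using True T0[OF eps0] lam0[OF k] by simp
        have "serve_density K lam Om alpha eps k x *
          (\<integral>i. measure (density lborel (erlang_density (M k - 1) 1)) {..<beta k * x powr alpha * i / P k} \<partial>mu eps k x)
          \<le> 2 * pi * lam k / T eps * R eps * E eps"
          by (rule mult_mono[OF sd_le inner[OF eps True]]) (use sd0 inner0 T0[OF eps0] lam0[OF k] True in auto)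
        thus ?thesis using True by (simp add: R_def C_def)
      qed
    qed
    also have "\<dots> = C eps * R eps"
      using R0[of eps] by (simp add: mult.commute)
    finally show ?thesis .
  qed
  have low: "0 \<le> outage K lam P M Om alpha beta eps k (mu eps k)" if eps: "eps \<ge> 1" for eps
  proof -
    have eps0: "eps > 0" using eps by simp
    show ?thesis unfolding outage_def set_lebesgue_integral_def
    proof (intro Bochner_Integration.integral_nonneg)
      fix x
      show "0 \<le> indicator {0<..acc_radius Om alpha eps k} x *\<^sub>R
         (serve_density K lam Om alpha eps k x *
          (\<integral>i. measure (density lborel (erlang_density (M k - 1) 1)) {..<beta k * x powr alpha * i / P k} \<partial>mu eps k x))"
        using T0[OF eps0] lam0[OF k] inner0[of x eps]
        by (auto simp: sd_eq indicator_def)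
    qed
  qed
  have lim: "((\<lambda>eps. C eps * R eps) \<longlongrightarrow> 0) at_top"
  proof -
    have eq: "C eps * R eps = (\<Sum>j\<in>{1..K}. (2 * pi * lam k * lam j * D j) * (R eps * R eps * A eps j / T eps))" for eps
    proof -
      have "C eps * R eps = (2 * pi * lam k / T eps * R eps * R eps) * E eps" by (simp add: C_def mult_ac)
      also have "\<dots> = (\<Sum>j\<in>{1..K}. (2 * pi * lam k / T eps * R eps * R eps) * (A eps j * lam j * D j))"
        by (simp add: E_def sum_distrib_left)
      also have "\<dots> = (\<Sum>j\<in>{1..K}. (2 * pi * lam k * lam j * D j) * (R eps * R eps * A eps j / T eps))"
        by (rule sum.cong) (simp_all add: mult_ac divide_inverse)
      finally show ?thesis .
    qed
    have "((\<lambda>eps. \<Sum>j\<in>{1..K}. (2 * pi * lam k * lam j * D j) * (R eps * R eps * A eps j / T eps)) \<longlongrightarrow> 0) at_top"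
    proof (rule tendsto_null_sum)
      fix j assume j: "j \<in> {1..K}"
      show "((\<lambda>eps. (2 * pi * lam k * lam j * D j) * (R eps * R eps * A eps j / T eps)) \<longlongrightarrow> 0) at_top"
        apply (rule tendsto_mult_right_zero)
        unfolding A_eq T_eq R_def acc_radius_def w_def
        by (rule asym2[OF L0 ck0[OF j] a Om0[OF k] lam0[OF k]])
    qed
    thus ?thesis unfolding eq .
  qed
  have "((\<lambda>eps. outage K lam P M Om alpha beta eps k (mu eps k)) \<longlongrightarrow> 0) at_top"
  proof (rule tendsto_sandwich[OF _ _ tendsto_const lim])
    show "\<forall>\<^sub>F n in at_top. 0 \<le> outage K lam P M Om alpha beta n k (mu n k)"
      using eventually_ge_at_top[of "1::real"] by eventually_elim (rule low)
    show "\<forall>\<^sub>F n in at_top. outage K lam P M Om alpha beta n k (mu n k) \<le> C n * R n"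
      using eventually_ge_at_top[of "1::real"] by eventually_elim (rule up)
  qed
  thus ?thesis unfolding Om_def .
qed


theorem proposition3:
  fixes K :: nat and lam :: "nat \<Rightarrow> real" and lam_u :: real
    and P :: "nat \<Rightarrow> real" and M :: "nat \<Rightarrow> nat" and B :: "nat \<Rightarrow> real"
    and alpha eta PC :: real and beta :: "nat \<Rightarrow> real"
    and mu :: "real \<Rightarrow> nat \<Rightarrow> real \<Rightarrow> real measure"
  assumes "\<forall>k\<in>{1..K}. lam k > 0 \<and> P k > 0 \<and> M k \<ge> 1 \<and> B k > 0 \<and> beta k > 0"
    and "lam_u > 0" and "alpha > 2" and "0 < eta" and "eta \<le> 1" and "PC > 0"
    and "\<forall>eps>0. \<forall>k\<in>{1..K}. \<forall>x\<in>{0<..acc_radius (Omega P M B) alpha eps k}.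
           is_interf_law (mu eps k x) K lam lam_u P (Omega P M B) alpha eps k x"
  shows "((\<lambda>eps. trans_eff K lam lam_u P M B alpha beta eta PC mu eps) \<longlongrightarrow>
           (\<Sum>k\<in>{1..K}. lam k * Omega P M B k powr (2 / alpha) * log 2 (1 + beta k))
           / (\<Sum>k\<in>{1..K}. lam k * Omega P M B k powr (2 / alpha) * (P k / eta + real (M k) * PC)))
         at_top"
proof (cases "K = 0")
  case True
  thus ?thesis by (simp add: trans_eff_def)
next
  case False
  note hyp = assms(1) and lu = assms(2) and a = assms(3) and eta = assms(4) and PC = assms(6)
  define Om where "Om = Omega P M B"
  define L where "L = Lambda K lam Om alpha"
  define w where "w = (\<lambda>eps::real. 1 - exp (- pi * L * eps powr (- (2 / alpha))))"
  define ck where "ck = (\<lambda>j. lam_u * Om j powr (2 / alpha) / L)"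
  define A where "A = (\<lambda>eps j. act_prob K lam lam_u Om alpha eps j)"
  define Ou where "Ou = (\<lambda>eps k. outage K lam P M Om alpha beta eps k (mu eps k))"
  define lg where "lg = (\<lambda>k. log 2 (1 + beta k))"
  define pw where "pw = (\<lambda>k. P k / eta + real (M k) * PC)"
  have Om0: "Om j > 0" if j: "j \<in> {1..K}" for j
  proof -
    have "P j > 0" "M j \<ge> 1" "B j > 0" using hyp j by auto
    thus ?thesis by (simp add: Om_def Omega_def)
  qed
  have lam0: "\<And>j. j \<in> {1..K} \<Longrightarrow> lam j > 0" and P0: "\<And>j. j \<in> {1..K} \<Longrightarrow> P j > 0"
    and M1: "\<And>j. j \<in> {1..K} \<Longrightarrow> M j \<ge> 1" using hyp by auto
  have lo: "lam j * Om j powr (2 / alpha) > 0" if j: "j \<in> {1..K}" for j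
    using lam0[OF j] Om0[OF j] by simp
  have ne: "{1..K} \<noteq> {}" using False by simp
  have L0: "L > 0" unfolding L_def Lambda_def
    using ne lo by (intro sum_pos) auto
  have w0: "\<And>eps. eps > 0 \<Longrightarrow> w eps > 0" unfolding w_def using L0 by auto
  have A1: "((\<lambda>eps. A eps j / w eps) \<longlongrightarrow> ck j) at_top" if j: "j \<in> {1..K}" for j
  proof -
    have "ck j > 0" unfolding ck_def using lu Om0[OF j] L0 by simp
    from asym1[OF L0 this, of "2 / alpha"] a
    show ?thesis by (simp add: A_def act_prob_def w_def ck_def L_def)
  qed
  have O1: "((\<lambda>eps. Ou eps j) \<longlongrightarrow> 0) at_top" if j: "j \<in> {1..K}" for j
    unfolding Ou_def Om_def by (rule outage_tendsto[OF hyp lu a assms(7) j])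
  define N' where "N' = (\<lambda>eps. \<Sum>k\<in>{1..K}. lam k * (A eps k / w eps) * (1 - Ou eps k) * lg k)"
  define D' where "D' = (\<lambda>eps. \<Sum>k\<in>{1..K}. lam k * (A eps k / w eps) * pw k)"
  have N'lim: "(N' \<longlongrightarrow> (\<Sum>k\<in>{1..K}. lam k * ck k * (1 - 0) * lg k)) at_top"
    unfolding N'_def by (intro tendsto_sum tendsto_mult tendsto_const tendsto_diff A1 O1)
  have D'lim: "(D' \<longlongrightarrow> (\<Sum>k\<in>{1..K}. lam k * ck k * pw k)) at_top"
    unfolding D'_def by (intro tendsto_sum tendsto_mult tendsto_const A1)
  have pw0: "pw k > 0" if k: "k \<in> {1..K}" for k
    unfolding pw_def using P0[OF k] M1[OF k] eta PC by (simp add: add_pos_nonneg)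
  have Dpos: "(\<Sum>k\<in>{1..K}. lam k * ck k * pw k) > 0"
  proof (rule sum_pos[OF _ ne])
    fix k assume k: "k \<in> {1..K}"
    have "ck k > 0" unfolding ck_def using lu Om0[OF k] L0 by simp
    thus "lam k * ck k * pw k > 0" using lam0[OF k] pw0[OF k] by simp
  qed simp
  have lim: "((\<lambda>eps. N' eps / D' eps) \<longlongrightarrow> (\<Sum>k\<in>{1..K}. lam k * ck k * (1 - 0) * lg k) / (\<Sum>k\<in>{1..K}. lam k * ck k * pw k)) at_top"
    using Dpos by (intro tendsto_divide N'lim D'lim) simp
  have ev: "\<forall>\<^sub>F eps in at_top. N' eps / D' eps = trans_eff K lam lam_u P M B alpha beta eta PC mu eps"
    using eventually_gt_at_top[of "0::real"]
  proof eventually_elim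
    case (elim eps)
    have wp: "w eps \<noteq> 0" using w0[OF elim] by simp
    have N: "(\<Sum>k\<in>{1..K}. lam k * A eps k * (1 - Ou eps k) * lg k) = w eps * N' eps"
      unfolding N'_def sum_distrib_left by (rule sum.cong) (use wp in simp_all)
    have D: "(\<Sum>k\<in>{1..K}. lam k * A eps k * pw k) = w eps * D' eps"
      unfolding D'_def sum_distrib_left by (rule sum.cong) (use wp in simp_all)
    have "trans_eff K lam lam_u P M B alpha beta eta PC mu eps
        = (\<Sum>k\<in>{1..K}. lam k * A eps k * (1 - Ou eps k) * lg k) / (\<Sum>k\<in>{1..K}. lam k * A eps k * pw k)"
      by (simp add: trans_eff_def Let_def A_def Ou_def lg_def pw_def Om_def)
    also have "\<dots> = N' eps / D' eps" unfolding N D using wp by simp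
    finally show ?case by simp
  qed
  have target: "(\<Sum>k\<in>{1..K}. lam k * ck k * (1 - 0) * lg k) / (\<Sum>k\<in>{1..K}. lam k * ck k * pw k)
      = (\<Sum>k\<in>{1..K}. lam k * Omega P M B k powr (2 / alpha) * log 2 (1 + beta k))
           / (\<Sum>k\<in>{1..K}. lam k * Omega P M B k powr (2 / alpha) * (P k / eta + real (M k) * PC))"
  proof -
    have c: "lam_u / L \<noteq> 0" using lu L0 by simp
    have 1: "(\<Sum>k\<in>{1..K}. lam k * ck k * (1 - 0) * lg k) = (lam_u / L) * (\<Sum>k\<in>{1..K}. lam k * Om k powr (2 / alpha) * lg k)"
      unfolding sum_distrib_left by (rule sum.cong) (simp_all add: ck_def mult_ac divide_inverse)
    have 2: "(\<Sum>k\<in>{1..K}. lam k * ck k * pw k) = (lam_u / L) * (\<Sum>k\<in>{1..K}. lam k * Om k powr (2 / alpha) * pw k)"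
      unfolding sum_distrib_left by (rule sum.cong) (simp_all add: ck_def mult_ac divide_inverse)
    show ?thesis unfolding 1 2 using c by (simp add: Om_def lg_def pw_def)
  qed
  show ?thesis
    using tendsto_cong[OF ev] lim unfolding target by simp
qed

end
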